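(* Let $N\ge 2$, $d\ge 1$, $1\le p\le q\le\infty$, and let $\Sigma\subset\mathbb{Z}_N^d$ be a nonempty set for which a $(p,q)$-restriction estimate holds with constant $C_{p,q}>0$. Let $f:\mathbb{Z}_N^d\to\mathbb{C}$ be a nonzero function supported in $E\subset\mathbb{Z}_N^d$ whose Fourier transform $\hat f$ is supported in $\Sigma$. Then $$|E|^{1/p}\cdot|\Sigma|\ \ge\ \frac{N^d}{C_{p,q}}.$$
   Context: $\mathbb{Z}_N$ is the cyclic group of order $N$, $\chi(t)=e^{2\pi i t/N}$ for $t\in\mathbb{Z}_N$, and $x\cdot m=\sum_i x_im_i$ (mod $N$). The Fourier transform of $f:\mathbb{Z}_N^d\to\mathbb{C}$ is $\hat f(m)=N^{-d}\sum_{x\in\mathbb{Z}_N^d}\chi(-x\cdot m)f(x)$, so that $f(x)=\sum_{m}\chi(x\cdot m)\hat f(m)$ and $\sum_x|f(x)|^2=N^d\sum_m|\hat f(m)|^2$. "Supported in $E$" means $f(x)=0$ for $x\notin E$. A $(p,q)$-restriction estimate holds for a nonempty $S\subset\mathbb{Z}_N^d$ with constant $C_{p,q}$ if for every $g:\mathbb{Z}_N^d\to\mathbb{C}$, $$\Big(\frac{1}{|S|}\sum_{m\in S}|\hat g(m)|^q\Big)^{1/q}\le C_{p,q}\,N^{-d}\Big(\sum_{x\in\mathbb{Z}_N^d}|g(x)|^p\Big)^{1/p},$$ where for $q=\infty$ the left side means $\max_{m\in S}|\hat g(m)|$. *)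

theory Defs
  imports "HOL-Analysis.Analysis" "HOL-Library.FuncSet"
begin

text \<open>Z_N^d is modelled as the finite set of extensional functions {..<d} \<rightarrow> {..<N}
  (the coordinate i of x is x i, a residue in {0..N-1}).\<close>

definition ZNd :: "nat \<Rightarrow> nat \<Rightarrow> (nat \<Rightarrow> nat) set" where
  "ZNd N d = ({..<d} \<rightarrow>\<^sub>E {..<N})"

definition chi :: "nat \<Rightarrow> int \<Rightarrow> complex" where
  "chi N t = cis (2 * pi * of_int (t mod int N) / real N)"

definition dotp :: "nat \<Rightarrow> (nat \<Rightarrow> nat) \<Rightarrow> (nat \<Rightarrow> nat) \<Rightarrow> int" where
  "dotp d x m = int (\<Sum>i<d. x i * m i)"

definition fourier :: "nat \<Rightarrow> nat \<Rightarrow> ((nat \<Rightarrow> nat) \<Rightarrow> complex) \<Rightarrow> (nat \<Rightarrow> nat) \<Rightarrow> complex" where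
  "fourier N d f m = (1 / (of_nat N ^ d)) * (\<Sum>x\<in>ZNd N d. chi N (- dotp d x m) * f x)"

definition lp_sum_norm :: "ereal \<Rightarrow> 'a set \<Rightarrow> ('a \<Rightarrow> complex) \<Rightarrow> real" where
  "lp_sum_norm p A g = (if p = \<infinity> then Max ((\<lambda>x. cmod (g x)) ` A)
     else (\<Sum>x\<in>A. cmod (g x) powr real_of_ereal p) powr (1 / real_of_ereal p))"

definition lp_avg_norm :: "ereal \<Rightarrow> 'a set \<Rightarrow> ('a \<Rightarrow> complex) \<Rightarrow> real" where
  "lp_avg_norm q S h = (if q = \<infinity> then Max ((\<lambda>m. cmod (h m)) ` S)
     else ((\<Sum>m\<in>S. cmod (h m) powr real_of_ereal q) / real (card S)) powr (1 / real_of_ereal q))"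

definition restriction_estimate ::
  "nat \<Rightarrow> nat \<Rightarrow> ereal \<Rightarrow> ereal \<Rightarrow> (nat \<Rightarrow> nat) set \<Rightarrow> real \<Rightarrow> bool" where
  "restriction_estimate N d p q S C \<longleftrightarrow>
     (\<forall>g :: (nat \<Rightarrow> nat) \<Rightarrow> complex.
        lp_avg_norm q S (fourier N d g) \<le> C * (1 / real N ^ d) * lp_sum_norm p (ZNd N d) g)"

definition inv_exp :: "ereal \<Rightarrow> real" where
  "inv_exp p = (if p = \<infinity> then 0 else 1 / real_of_ereal p)"

end

theory Submission
  imports Defs
begin


lemma chi_cis: assumes "N > 0" shows "chi N t = cis (2 * pi * of_int t / real N)"
proof -
  have t: "of_int t = real_of_int (t mod int N) + real N * of_int (t div int N)"
    by (metis of_int_add of_int_mult of_int_of_nat_eq mod_mult_div_eq add.commute mult.commute)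
  have "cis (2 * pi * of_int t / real N) = cis (2 * pi * of_int (t mod int N) / real N + 2 * pi * of_int (t div int N))"
    using assms by (subst t) (simp add: field_simps)
  also have "\<dots> = chi N t"
    by (simp add: chi_def flip: cis_mult)
  finally show ?thesis by simp
qed

lemma chi_add: "N > 0 \<Longrightarrow> chi N (a + b) = chi N a * chi N b"
  by (simp add: chi_cis cis_mult add_divide_distrib distrib_left)

lemma chi_0: "N > 0 \<Longrightarrow> chi N 0 = 1"
  by (simp add: chi_cis)

lemma chi_sum: assumes "finite A" "N > 0" shows "chi N (\<Sum>i\<in>A. g i) = (\<Prod>i\<in>A. chi N (g i))"
  using assms(1) by (induction A rule: finite_induct) (auto simp: chi_0[OF assms(2)] chi_add[OF assms(2)])

lemma norm_chi: "N > 0 \<Longrightarrow> norm (chi N t) = 1"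
  by (simp add: chi_cis)

lemma chi_pow: "N > 0 \<Longrightarrow> chi N a ^ k = chi N (a * int k)"
  by (induction k) (auto simp: chi_0 chi_add distrib_left)

lemma sum1d:
  assumes "N > 0" "\<bar>a\<bar> < int N"
  shows "(\<Sum>k<N. chi N (a * int k)) = (if a = 0 then of_nat N else 0)"
proof (cases "a = 0")
  case True then show ?thesis using assms by (simp add: chi_0)
next
  case False
  define w where "w = chi N a"
  have w1: "w \<noteq> 1"
  proof
    assume "w = 1"
    then have "cos (2 * pi * of_int a / real N) = 1"
      using assms by (auto simp: w_def chi_cis complex_eq_iff)
    then obtain n :: int where n: "2 * pi * of_int a / real N = n * 2 * pi"
      by (auto simp: cos_one_2pi_int)
    then have "real_of_int a = real N * n" using assms by (simp add: field_simps)
    then have "a = int N * n" by (metis of_int_eq_iff of_int_mult of_int_of_nat_eq)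
    moreover have "n \<noteq> 0" using False \<open>a = int N * n\<close> by auto
    then have "1 \<le> \<bar>n\<bar>" by linarith
    then have "int N * 1 \<le> int N * \<bar>n\<bar>" by (intro mult_left_mono) auto
    ultimately show False using assms by (simp add: abs_mult)
  qed
  have "(\<Sum>k<N. chi N (a * int k)) = (\<Sum>k<N. w ^ k)"
    using assms by (simp add: w_def chi_pow)
  also have "\<dots> = (w ^ N - 1) / (w - 1)" using w1 by (rule geometric_sum)
  also have "w ^ N = 1"
  proof -
    have "w ^ N = chi N (a * int N)" unfolding w_def using assms(1) by (rule chi_pow)
    also have "\<dots> = 1" by (simp add: chi_def)
    finally show ?thesis .
  qed
  finally show ?thesis using False by simp
qed

lemma finite_ZNd: "finite (ZNd N d)" by (simp add: ZNd_def finite_PiE)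

lemma orth:
  assumes "N > 0" "x \<in> ZNd N d" "y \<in> ZNd N d"
  shows "(\<Sum>m\<in>ZNd N d. chi N (dotp d x m - dotp d y m)) = (if x = y then of_nat N ^ d else 0)"
proof -
  have "(\<Sum>m\<in>ZNd N d. chi N (dotp d x m - dotp d y m))
      = (\<Sum>m\<in>ZNd N d. \<Prod>i<d. chi N ((int (x i) - int (y i)) * int (m i)))"
  proof (rule sum.cong[OF refl])
    fix m
    have "dotp d x m - dotp d y m = (\<Sum>i<d. (int (x i) - int (y i)) * int (m i))"
      unfolding dotp_def of_nat_sum sum_subtractf[symmetric] left_diff_distrib by simp
    then show "chi N (dotp d x m - dotp d y m) = (\<Prod>i<d. chi N ((int (x i) - int (y i)) * int (m i)))"
      using assms(1) by (simp add: chi_sum)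
  qed
  also have "\<dots> = (\<Prod>i<d. \<Sum>k<N. chi N ((int (x i) - int (y i)) * int k))"
    unfolding ZNd_def by (rule prod_sum_PiE[symmetric]) auto
  also have "\<dots> = (\<Prod>i<d. (if x i = y i then of_nat N else 0))"
  proof (rule prod.cong[OF refl])
    fix i assume "i \<in> {..<d}"
    then have "x i < N" "y i < N" using assms unfolding ZNd_def by auto
    then show "(\<Sum>k<N. chi N ((int (x i) - int (y i)) * int k)) = (if x i = y i then of_nat N else 0)"
      using assms(1) by (subst sum1d) auto
  qed
  also have "\<dots> = (if x = y then of_nat N ^ d else 0)"
  proof (cases "x = y")
    case False
    then obtain i where "x i \<noteq> y i" by auto
    moreover have "i < d"
    proof (rule ccontr)
      assume "\<not> i < d"
      then have "x i = undefined" "y i = undefined" using assms unfolding ZNd_def PiE_def extensional_def by auto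
      then show False using \<open>x i \<noteq> y i\<close> by simp
    qed
    ultimately have "(\<Prod>i<d. (if x i = y i then of_nat N else 0)) = (0::complex)"
      by (intro prod_zero) auto
    then show ?thesis using False by simp
  qed simp
  finally show ?thesis .
qed


lemma inversion:
  assumes "N > 0" "x \<in> ZNd N d"
  shows "(\<Sum>m\<in>ZNd N d. chi N (dotp d x m) * fourier N d f m) = f x"
proof -
  have "(\<Sum>m\<in>ZNd N d. chi N (dotp d x m) * fourier N d f m)
     = (1 / of_nat N ^ d) * (\<Sum>m\<in>ZNd N d. \<Sum>y\<in>ZNd N d. f y * chi N (dotp d x m - dotp d y m))"
    unfolding fourier_def
  proof -
    have e: "chi N (dotp d x m) * chi N (- dotp d y m) = chi N (dotp d x m - dotp d y m)" for m y
      using chi_add[OF assms(1), of "dotp d x m" "- dotp d y m"] by simp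
    show "(\<Sum>m\<in>ZNd N d. chi N (dotp d x m) * (1 / of_nat N ^ d * (\<Sum>y\<in>ZNd N d. chi N (- dotp d y m) * f y)))
     = (1 / of_nat N ^ d) * (\<Sum>m\<in>ZNd N d. \<Sum>y\<in>ZNd N d. f y * chi N (dotp d x m - dotp d y m))"
      unfolding sum_distrib_left
      by (intro sum.cong refl) (simp add: e[symmetric])
  qed
  also have "\<dots> = (1 / of_nat N ^ d) * (\<Sum>y\<in>ZNd N d. f y * (\<Sum>m\<in>ZNd N d. chi N (dotp d x m - dotp d y m)))"
    by (simp only: sum_distrib_left) (rule sum.swap)
  also have "\<dots> = (1 / of_nat N ^ d) * (\<Sum>y\<in>ZNd N d. (if y = x then f x * of_nat N ^ d else 0))"
  proof (intro arg_cong2[where f="(*)"] refl sum.cong)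
    fix y assume "y \<in> ZNd N d"
    then show "f y * (\<Sum>m\<in>ZNd N d. chi N (dotp d x m - dotp d y m)) = (if y = x then f x * of_nat N ^ d else 0)"
      using orth[OF assms(1,2), of y] by auto
  qed
  also have "\<dots> = (1 / of_nat N ^ d) * (f x * of_nat N ^ d)"
    using assms(2) finite_ZNd by (subst sum.delta) auto
  also have "\<dots> = f x" using assms(1) by simp
  finally show ?thesis .
qed



lemma powr_convex0:
  assumes "p \<ge> (1::real)" shows "convex_on {0..} (\<lambda>x::real. x powr p)"
proof (rule convex_onI)
  show "convex {0::real..}" by (simp add: convex_real_interval)
  fix t x y :: real assume t: "0 < t" "t < 1" and xy: "x \<in> {0..}" "y \<in> {0..}"
  have tp: "s powr p \<le> s" if "0 \<le> s" "s \<le> 1" for s :: real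
    using powr_mono'[of 1 p s] that assms by simp
  show "((1 - t) *\<^sub>R x + t *\<^sub>R y) powr p \<le> (1 - t) * x powr p + t * y powr p"
  proof (cases "x = 0 \<or> y = 0")
    case True
    then show ?thesis
    proof
      assume "x = 0"
      then have "((1 - t) *\<^sub>R x + t *\<^sub>R y) powr p = t powr p * y powr p"
        using xy t by (simp add: powr_mult)
      also have "\<dots> \<le> t * y powr p" using tp[of t] t by (intro mult_right_mono) auto
      finally show ?thesis using \<open>x = 0\<close> assms by simp
    next
      assume "y = 0"
      then have "((1 - t) *\<^sub>R x + t *\<^sub>R y) powr p = (1 - t) powr p * x powr p"
        using xy t by (simp add: powr_mult)
      also have "\<dots> \<le> (1 - t) * x powr p" using tp[of "1 - t"] t by (intro mult_right_mono) auto
      finally show ?thesis using \<open>y = 0\<close> assms by simp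
    qed
  next
    case False
    then have "x \<in> {0<..}" "y \<in> {0<..}" using xy by auto
    then show ?thesis using convex_onD[OF powr_convex[OF assms], of t x y] t by simp
  qed
qed

lemma power_mean:
  fixes a :: "'a \<Rightarrow> real"
  assumes "finite S" "S \<noteq> {}" "\<And>m. m \<in> S \<Longrightarrow> a m \<ge> 0" "r \<ge> 1"
  shows "(\<Sum>m\<in>S. a m) / card S \<le> ((\<Sum>m\<in>S. a m powr r) / card S) powr (1 / r)"
proof -
  have n: "real (card S) > 0" using assms by (simp add: card_gt_0_iff)
  have "(\<Sum>m\<in>S. (1 / card S) *\<^sub>R a m) powr r \<le> (\<Sum>m\<in>S. (1 / card S) * a m powr r)"
    by (rule convex_on_sum[OF assms(1,2) powr_convex0[OF assms(4)]]) (use assms n in auto)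
  then have u: "((\<Sum>m\<in>S. a m) / card S) powr r \<le> (\<Sum>m\<in>S. a m powr r) / card S"
    by (simp add: sum_distrib_left[symmetric] sum_divide_distrib[symmetric])
  have u0: "(\<Sum>m\<in>S. a m) / card S \<ge> 0" using assms by (simp add: sum_nonneg)
  have "(\<Sum>m\<in>S. a m) / card S = (((\<Sum>m\<in>S. a m) / card S) powr r) powr (1 / r)"
    using u0 assms(4) by (simp only: powr_powr) (simp add: sum_nonneg assms(3))
  also have "\<dots> \<le> ((\<Sum>m\<in>S. a m powr r) / card S) powr (1 / r)"
    using u assms(4) by (intro powr_mono2) auto
  finally show ?thesis .
qed

theorem theorem3:
  fixes N d :: nat and p q :: ereal and \<Sigma> E :: "(nat \<Rightarrow> nat) set"
    and C :: real and f :: "(nat \<Rightarrow> nat) \<Rightarrow> complex"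
  assumes "N \<ge> 2" and "d \<ge> 1"
    and "1 \<le> p" and "p \<le> q"
    and "\<Sigma> \<subseteq> ZNd N d" and "\<Sigma> \<noteq> {}"
    and "C > 0" and "restriction_estimate N d p q \<Sigma> C"
    and "E \<subseteq> ZNd N d"
    and "\<forall>x\<in>ZNd N d. x \<notin> E \<longrightarrow> f x = 0"
    and "\<exists>x\<in>ZNd N d. f x \<noteq> 0"
    and "\<forall>m\<in>ZNd N d. m \<notin> \<Sigma> \<longrightarrow> fourier N d f m = 0"
  shows "real (card E) powr inv_exp p * real (card \<Sigma>) \<ge> real N ^ d / C"
proof -
  define S where "S = ZNd N d"
  define F where "F = fourier N d f"
  have N0: "N > 0" using assms(1) by simp
  have finS: "finite S" unfolding S_def by (rule finite_ZNd)
  have finSig: "finite \<Sigma>" using assms(5) finS S_def finite_subset by blast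
  have finE: "finite E" using assms(9) finS S_def finite_subset by blast
  obtain x1 where x1: "x1 \<in> S" "f x1 \<noteq> 0" using assms(11) S_def by auto
  have x1E: "x1 \<in> E" using x1 assms(10) S_def by auto
  have cE: "real (card E) > 0" using finE x1E by (simp add: card_gt_0_iff) blast
  define M where "M = Max ((\<lambda>x. cmod (f x)) ` S)"
  have Mge: "cmod (f x) \<le> M" if "x \<in> S" for x
    unfolding M_def using finS that by (intro Max_ge) auto
  obtain x0 where x0: "x0 \<in> S" "cmod (f x0) = M"
  proof -
    have "M \<in> (\<lambda>x. cmod (f x)) ` S" unfolding M_def using finS x1 by (intro Max_in) auto
    then show ?thesis using that by auto
  qed
  have M0: "M > 0" using Mge[OF x1(1)] x1(2) by (smt (verit) zero_less_norm_iff)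
  have st1: "M \<le> (\<Sum>m\<in>\<Sigma>. cmod (F m))"
  proof -
    have "M = cmod (\<Sum>m\<in>S. chi N (dotp d x0 m) * F m)"
      using inversion[OF N0, of x0 d f] x0 unfolding S_def F_def by simp
    also have "\<dots> \<le> (\<Sum>m\<in>S. cmod (chi N (dotp d x0 m) * F m))" by (rule norm_sum)
    also have "\<dots> = (\<Sum>m\<in>S. cmod (F m))" by (simp add: norm_mult norm_chi[OF N0])
    also have "\<dots> = (\<Sum>m\<in>\<Sigma>. cmod (F m))"
      using finS assms(5,12) unfolding S_def F_def by (intro sum.mono_neutral_right) auto
    finally show ?thesis .
  qed
  define A where "A = lp_avg_norm q \<Sigma> F"
  have cSig: "real (card \<Sigma>) > 0" using finSig assms(6) by (simp add: card_gt_0_iff)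
  have st2: "(\<Sum>m\<in>\<Sigma>. cmod (F m)) \<le> card \<Sigma> * A"
  proof (cases "q = \<infinity>")
    case True
    have "(\<Sum>m\<in>\<Sigma>. cmod (F m)) \<le> (\<Sum>m\<in>\<Sigma>. A)"
      unfolding A_def lp_avg_norm_def using True finSig by (intro sum_mono) auto
    then show ?thesis by simp
  next
    case False
    have q1: "1 \<le> q" using assms(3,4) by (rule order_trans)
    obtain r where r: "q = ereal r" "r \<ge> 1" using False q1
      by (cases q) auto
    have "(\<Sum>m\<in>\<Sigma>. cmod (F m)) / card \<Sigma> \<le> A"
      unfolding A_def lp_avg_norm_def using False r power_mean[OF finSig assms(6), of "\<lambda>m. cmod (F m)" r] by simp
    then show ?thesis using cSig by (simp add: field_simps)
  qed
  define P where "P = lp_sum_norm p S f"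
  have st3: "A \<le> C * (1 / real N ^ d) * P"
    using assms(8) unfolding restriction_estimate_def A_def F_def P_def S_def by blast
  have st4: "P \<le> real (card E) powr inv_exp p * M"
  proof (cases "p = \<infinity>")
    case True
    then show ?thesis unfolding P_def lp_sum_norm_def inv_exp_def M_def using cE by simp
  next
    case False
    obtain r where r: "p = ereal r" "r \<ge> 1" using False assms(3) by (cases p) auto
    have "(\<Sum>x\<in>S. cmod (f x) powr r) = (\<Sum>x\<in>E. cmod (f x) powr r)"
      using finS assms(9,10) unfolding S_def by (intro sum.mono_neutral_right) auto
    also have "\<dots> \<le> (\<Sum>x\<in>E. M powr r)"
      using Mge assms(9) r(2) unfolding S_def by (intro sum_mono powr_mono2) auto
    also have "\<dots> = real (card E) * M powr r" by simp
    finally have sb: "(\<Sum>x\<in>S. cmod (f x) powr r) \<le> real (card E) * M powr r" .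
    have "P = (\<Sum>x\<in>S. cmod (f x) powr r) powr (1 / r)"
      unfolding P_def lp_sum_norm_def using False r by simp
    also have "\<dots> \<le> (real (card E) * M powr r) powr (1 / r)"
      using sb r(2) by (intro powr_mono2) (auto intro: sum_nonneg)
    also have "\<dots> = real (card E) powr (1 / r) * M"
      using cE M0 r(2) by (simp add: powr_mult powr_powr)
    finally show ?thesis using False r unfolding inv_exp_def by simp
  qed
  define K where "K = real (card E) powr inv_exp p"
  have Nd: "real N ^ d > 0" using N0 by simp
  have c0: "C * (1 / real N ^ d) \<ge> 0" using assms(7) Nd by simp
  have A2: "A \<le> C * (1 / real N ^ d) * (K * M)"
    using st3 mult_left_mono[OF st4 c0] unfolding K_def by linarith
  have "M \<le> card \<Sigma> * A" using st1 st2 by linarith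
  also have "\<dots> \<le> card \<Sigma> * (C * (1 / real N ^ d) * (K * M))"
    using A2 cSig by (intro mult_left_mono) auto
  also have "\<dots> = M * (card \<Sigma> * C * K / real N ^ d)" by simp
  finally have "M * 1 \<le> M * (card \<Sigma> * C * K / real N ^ d)" by simp
  then have "1 \<le> card \<Sigma> * C * K / real N ^ d"
    using M0 by (simp only: mult_le_cancel_left_pos)
  then have "real N ^ d \<le> card \<Sigma> * C * K" using Nd by (simp add: le_divide_eq)
  then have "real N ^ d \<le> (K * card \<Sigma>) * C" by (simp add: mult_ac)
  then show ?thesis using assms(7) unfolding K_def by (simp add: divide_le_eq)
qed

end
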